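(* Let $0<p<1/2$, let $1\le\ell\le L$ be integers, and let $\mu=2^{-n}\mathrm{Vol}(n,pn)$. Let $a,b,x_1,\dots,x_L,y_{\ell+1},\dots,y_L$ be chosen independently and uniformly at random from $\mathbb{F}_2^n$. Let $\mathcal{E}$ be the event that $\Delta(a,x_i)\le pn$ and $\Delta(b,x_i)\le pn$ for all $1\le i\le\ell$, and $\Delta(a,x_i)\le pn$ and $\Delta(b,y_i)\le pn$ for all $\ell+1\le i\le L$. Then, for all sufficiently large $n$ (with $pn$ an integer), $$\Pr[\mathcal{E}]\le\min\left(\mu^{2L-\ell+1},\ 2^{-n}\cdot\mu^{2L-\ell}\cdot C_p^L\cdot n^{L/2}\cdot(1+2^{-\alpha_p\ell})^n\right),$$ where $\alpha_p=\frac12\log_2\frac{1}{4p(1-p)}$ and $C_p>0$ is a constant depending only on $p$ for which $\frac{\mathrm{Vol}(n,pn;d)}{\mathrm{Vol}(n,pn)}\le 2^{-\alpha_p d}C_p\sqrt{n}$ for all $1\le d\le n$ and all sufficiently large $n$.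
   Context: $\Delta$ is Hamming distance on $\mathbb{F}_2^n$, $\mathrm{Vol}(n,r)=|\{y:\Delta(0^n,y)\le r\}|$, and $\mathrm{Vol}(n,pn;d)=|\{y:\Delta(0^n,y)\le pn,\ \Delta(1^d0^{n-d},y)\le pn\}|$. *)

theory Defs
  imports "HOL-Analysis.Analysis"
begin

text \<open>Vectors of F_2^n are represented by their supports, i.e. subsets of {..<n}.
  The all-zero vector is {} and the vector 1^d 0^(n-d) is {..<d}.\<close>

definition cube :: "nat \<Rightarrow> nat set set" where
  "cube n = Pow {..<n}"

definition hamming :: "nat set \<Rightarrow> nat set \<Rightarrow> nat" where
  "hamming x y = card ((x - y) \<union> (y - x))"

definition Vol :: "nat \<Rightarrow> real \<Rightarrow> nat" where
  "Vol n r = card {y \<in> cube n. real (hamming {} y) \<le> r}"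

definition Vol2 :: "nat \<Rightarrow> real \<Rightarrow> nat \<Rightarrow> nat" where
  "Vol2 n r d = card {y \<in> cube n. real (hamming {} y) \<le> r \<and> real (hamming {..<d} y) \<le> r}"

definition alpha_p :: "real \<Rightarrow> real" where
  "alpha_p p = (1/2) * log 2 (1 / (4 * p * (1 - p)))"

definition event_E :: "nat \<Rightarrow> real \<Rightarrow> nat \<Rightarrow> nat \<Rightarrow> nat set \<Rightarrow> nat set
    \<Rightarrow> (nat \<Rightarrow> nat set) \<Rightarrow> (nat \<Rightarrow> nat set) \<Rightarrow> bool" where
  "event_E n p l L a b x y \<longleftrightarrow>
     (\<forall>i\<in>{1..l}. real (hamming a (x i)) \<le> p * n \<and> real (hamming b (x i)) \<le> p * n) \<and>
     (\<forall>i\<in>{l+1..L}. real (hamming a (x i)) \<le> p * n \<and> real (hamming b (y i)) \<le> p * n)"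

text \<open>Probability of E when a, b, x_1..x_L, y_(l+1)..y_L are independent and uniform
  on F_2^n: number of favourable outcomes over the number of outcomes.\<close>
definition prob_E :: "nat \<Rightarrow> real \<Rightarrow> nat \<Rightarrow> nat \<Rightarrow> real" where
  "prob_E n p l L =
     real (card {(a, b, x, y). a \<in> cube n \<and> b \<in> cube n \<and>
                   x \<in> (\<Pi>\<^sub>E i\<in>{1..L}. cube n) \<and> y \<in> (\<Pi>\<^sub>E i\<in>{l+1..L}. cube n) \<and>
                   event_E n p l L a b x y})
     / real (card (cube n \<times> cube n \<times> (\<Pi>\<^sub>E i\<in>{1..L}. cube n) \<times> (\<Pi>\<^sub>E i\<in>{l+1..L}. cube n)))"

end

theory Submission
  imports Defs
begin


definition sd :: "nat set \<Rightarrow> nat set \<Rightarrow> nat set" where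
  "sd x y = (x - y) \<union> (y - x)"

lemma ham_sd: "hamming x y = card (sd x y)" by (simp add: hamming_def sd_def)
lemma sd_comm: "sd x y = sd y x" by (auto simp: sd_def)
lemma ham_comm: "hamming x y = hamming y x" by (simp add: ham_sd sd_comm)
lemma sd_sd: "sd (sd x a) (sd y a) = sd x y" by (auto simp: sd_def)
lemma sd_inv: "sd (sd x a) a = x" by (auto simp: sd_def)
lemma sd_cube: "x \<in> cube n \<Longrightarrow> a \<in> cube n \<Longrightarrow> sd x a \<in> cube n" by (auto simp: sd_def cube_def)
lemma ham_trans: "hamming (sd x a) (sd y a) = hamming x y" by (simp add: ham_sd sd_sd)
lemma sd_self: "sd a a = {}" by (auto simp: sd_def)
lemma finite_cube: "finite (cube n)" by (simp add: cube_def)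
lemma card_cube: "card (cube n) = 2 ^ n" by (simp add: cube_def card_Pow)
lemma cube_finite_el: "x \<in> cube n \<Longrightarrow> finite x" by (auto simp: cube_def intro: finite_subset)

lemma bij_sd: "a \<in> cube n \<Longrightarrow> bij_betw (\<lambda>x. sd x a) (cube n) (cube n)"
  by (rule bij_betw_byWitness[where f'="\<lambda>x. sd x a"]) (auto simp: sd_inv sd_cube)

lemma card_trans:
  assumes "a \<in> cube n"
  shows "card {x \<in> cube n. P (sd x a)} = card {z \<in> cube n. P z}"
proof -
  have inj: "inj_on (\<lambda>x. sd x a) {x \<in> cube n. P (sd x a)}"
    using bij_sd[OF assms] by (auto simp: bij_betw_def intro: inj_on_subset)
  have "(\<lambda>x. sd x a) ` {x \<in> cube n. P (sd x a)} = {z \<in> cube n. P z}"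
  proof
    show "{z \<in> cube n. P z} \<subseteq> (\<lambda>x. sd x a) ` {x \<in> cube n. P (sd x a)}"
    proof
      fix z assume "z \<in> {z \<in> cube n. P z}"
      then show "z \<in> (\<lambda>x. sd x a) ` {x \<in> cube n. P (sd x a)}"
        using assms by (intro image_eqI[where x="sd z a"]) (auto simp: sd_inv sd_cube)
    qed
  qed (use assms in \<open>auto simp: sd_cube\<close>)
  then show ?thesis using card_image[OF inj] by simp
qed

lemma sum_trans:
  assumes "a \<in> cube n"
  shows "(\<Sum>b\<in>cube n. f (hamming a b)) = (\<Sum>c\<in>cube n. f (card c))"
proof -
  have "(\<Sum>b\<in>cube n. f (card (sd b a))) = (\<Sum>c\<in>cube n. f (card c))"
    by (rule sum.reindex_bij_betw[OF bij_sd[OF assms]])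
  then show ?thesis by (simp add: ham_sd sd_comm)
qed

lemma ball_card:
  assumes "a \<in> cube n"
  shows "card {x \<in> cube n. real (hamming a x) \<le> r} = Vol n r"
proof -
  have "card {x \<in> cube n. real (hamming a x) \<le> r} = card {x \<in> cube n. real (hamming {} (sd x a)) \<le> r}"
    by (simp add: ham_trans[of a a, symmetric] sd_self ham_comm[of a])
  also have "\<dots> = Vol n r" unfolding Vol_def by (rule card_trans[OF assms])
  finally show ?thesis .
qed

lemma sum_pow_card: "(\<Sum>c\<in>cube n. (t::real) ^ card c) = (1 + t) ^ n"
proof (induction n)
  case 0 then show ?case by (simp add: cube_def)
next
  case (Suc n)
  have P: "cube (Suc n) = cube n \<union> insert n ` cube n"
    by (simp add: cube_def lessThan_Suc Pow_insert)
  have disj: "cube n \<inter> insert n ` cube n = {}" by (auto simp: cube_def)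
  have inj: "inj_on (insert n) (cube n)"
    unfolding inj_on_def cube_def by (metis PowD insert_ident lessThan_iff less_irrefl subsetD)
  have "(\<Sum>c\<in>insert n ` cube n. t ^ card c) = (\<Sum>c\<in>cube n. t ^ card (insert n c))"
    by (rule sum.reindex[OF inj, unfolded comp_def])
  also have "\<dots> = (\<Sum>c\<in>cube n. t * t ^ card c)"
  proof (rule sum.cong)
    fix c assume "c \<in> cube n"
    then have "finite c" "n \<notin> c" by (auto simp: cube_def intro: finite_subset)
    then show "t ^ card (insert n c) = t * t ^ card c" by simp
  qed simp
  finally have "(\<Sum>c\<in>cube (Suc n). t ^ card c) = (\<Sum>c\<in>cube n. t ^ card c) + t * (\<Sum>c\<in>cube n. t ^ card c)"
    unfolding P by (simp add: sum.union_disjoint finite_cube disj sum_distrib_left)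
  then show ?case using Suc by (simp add: algebra_simps)
qed

definition Wc :: "nat \<Rightarrow> real \<Rightarrow> nat set \<Rightarrow> nat" where
  "Wc n r c = card {z \<in> cube n. real (hamming {} z) \<le> r \<and> real (hamming c z) \<le> r}"

lemma ham_image:
  assumes "inj_on f A" "x \<subseteq> A" "y \<subseteq> A"
  shows "hamming (f ` x) (f ` y) = hamming x y"
proof -
  have "sd (f ` x) (f ` y) = f ` (sd x y)"
    using assms unfolding sd_def inj_on_def by blast
  moreover have "inj_on f (sd x y)" using assms by (auto simp: sd_def intro: inj_on_subset)
  ultimately show ?thesis by (simp add: ham_sd card_image)
qed

lemma Wc_mono:
  assumes f: "bij_betw f {..<n} {..<n}" and c: "c \<in> cube n"
  shows "Wc n r c \<le> Wc n r (f ` c)"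
proof -
  have inj: "inj_on f {..<n}" using f by (simp add: bij_betw_def)
  let ?S = "{z \<in> cube n. real (hamming {} z) \<le> r \<and> real (hamming c z) \<le> r}"
  let ?T = "{z \<in> cube n. real (hamming {} z) \<le> r \<and> real (hamming (f ` c) z) \<le> r}"
  have "inj_on ((`) f) ?S"
  proof (rule inj_onI)
    fix x y assume "x \<in> ?S" "y \<in> ?S" "f ` x = f ` y"
    then show "x = y" using inj_on_image_eq_iff[OF inj, of x y] by (auto simp: cube_def)
  qed
  moreover have "(`) f ` ?S \<subseteq> ?T"
  proof
    fix w assume "w \<in> (`) f ` ?S"
    then obtain z where z: "z \<in> ?S" "w = f ` z" by blast
    have zs: "z \<subseteq> {..<n}" "c \<subseteq> {..<n}" using z c by (auto simp: cube_def)
    have "w \<in> cube n" using z(2) f zs(1) unfolding cube_def bij_betw_def by auto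
    moreover have "hamming {} w = hamming {} z"
      using ham_image[OF inj _ zs(1), of "{}"] z by simp
    moreover have "hamming (f ` c) w = hamming c z"
      using ham_image[OF inj zs(2) zs(1)] z by simp
    ultimately show "w \<in> ?T" using z(1) by simp
  qed
  moreover have "finite ?T" using finite_cube by simp
  ultimately show ?thesis unfolding Wc_def by (rule card_inj_on_le)
qed

lemma perm_exists:
  assumes c: "c \<subseteq> {..<n}"
  shows "\<exists>f. bij_betw f {..<n} {..<n} \<and> f ` c = {..<card c}"
proof -
  have fc: "finite c" using c finite_subset by blast
  have cn: "card c \<le> n" using card_mono[OF finite_lessThan c] by simp
  obtain g1 where g1: "bij_betw g1 c {..<card c}"
    using finite_same_card_bij[OF fc finite_lessThan] by auto
  have "card ({..<n} - c) = card {card c..<n}" using c fc by (simp add: card_Diff_subset)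
  then obtain g2 where g2: "bij_betw g2 ({..<n} - c) {card c..<n}"
    using finite_same_card_bij[of "{..<n} - c" "{card c..<n}"] by auto
  define f where "f i = (if i \<in> c then g1 i else g2 i)" for i
  have b1: "bij_betw f c {..<card c}"
    using g1 bij_betw_cong[of c f g1 "{..<card c}"] by (simp add: f_def)
  have b2: "bij_betw f ({..<n} - c) {card c..<n}"
    using g2 bij_betw_cong[of "{..<n} - c" f g2 "{card c..<n}"] by (simp add: f_def)
  have "bij_betw f (c \<union> ({..<n} - c)) ({..<card c} \<union> {card c..<n})"
    by (rule bij_betw_combine[OF b1 b2]) auto
  moreover have "c \<union> ({..<n} - c) = {..<n}" using c by auto
  moreover have "{..<card c} \<union> {card c..<n} = {..<n}" using cn by auto
  ultimately have "bij_betw f {..<n} {..<n}" by simp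
  then show ?thesis using b1 by (auto simp: bij_betw_def)
qed

lemma Wc_eq:
  assumes c: "c \<in> cube n"
  shows "Wc n r c = Vol2 n r (card c)"
proof -
  have "c \<subseteq> {..<n}" using c by (simp add: cube_def)
  then obtain f where f: "bij_betw f {..<n} {..<n}" "f ` c = {..<card c}"
    using perm_exists by blast
  let ?g = "inv_into {..<n} f"
  have g: "bij_betw ?g {..<n} {..<n}" using f(1) by (rule bij_betw_inv_into)
  have "?g ` (f ` c) = c" using f(1) c by (simp add: bij_betw_def cube_def inv_into_image_cancel)
  moreover have "f ` c \<in> cube n" using f(1) c unfolding cube_def bij_betw_def by blast
  ultimately have "Wc n r (f ` c) \<le> Wc n r c" using Wc_mono[OF g, of "f ` c" r] by simp
  with Wc_mono[OF f(1) c, of r] have "Wc n r c = Wc n r {..<card c}" using f(2) by simp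
  then show ?thesis by (simp add: Wc_def Vol2_def)
qed

lemma W_eq:
  assumes a: "a \<in> cube n" and b: "b \<in> cube n"
  shows "card {x \<in> cube n. real (hamming a x) \<le> r \<and> real (hamming b x) \<le> r} = Vol2 n r (hamming a b)"
proof -
  have "card {x \<in> cube n. real (hamming a x) \<le> r \<and> real (hamming b x) \<le> r}
     = card {x \<in> cube n. real (hamming {} (sd x a)) \<le> r \<and> real (hamming (sd b a) (sd x a)) \<le> r}"
    by (simp add: ham_trans[of a a, symmetric] ham_trans sd_self ham_comm[of a])
  also have "\<dots> = Wc n r (sd b a)" unfolding Wc_def by (rule card_trans[OF a])
  also have "\<dots> = Vol2 n r (hamming a b)"
    by (simp add: Wc_eq sd_cube a b ham_sd sd_comm)
  finally show ?thesis .
qed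

lemma card_fav:
  fixes n :: nat and r :: real
  assumes lL: "l \<le> L"
  defines "B \<equiv> \<lambda>a. {x \<in> cube n. real (hamming a x) \<le> r}"
  shows "card {(a, b, x, y). a \<in> cube n \<and> b \<in> cube n \<and>
                   x \<in> (\<Pi>\<^sub>E i\<in>{1..L}. cube n) \<and> y \<in> (\<Pi>\<^sub>E i\<in>{l+1..L}. cube n) \<and>
                   (\<forall>i\<in>{1..l}. real (hamming a (x i)) \<le> r \<and> real (hamming b (x i)) \<le> r) \<and>
     (\<forall>i\<in>{l+1..L}. real (hamming a (x i)) \<le> r \<and> real (hamming b (y i)) \<le> r)}
   = (\<Sum>a\<in>cube n. \<Sum>b\<in>cube n. card (B a \<inter> B b) ^ l * Vol n r ^ (L - l) * Vol n r ^ (L - l))"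
proof -
  define X where "X a b i = (if i \<le> l then B a \<inter> B b else B a)" for a b i
  have eq: "{(a, b, x, y). a \<in> cube n \<and> b \<in> cube n \<and>
                   x \<in> (\<Pi>\<^sub>E i\<in>{1..L}. cube n) \<and> y \<in> (\<Pi>\<^sub>E i\<in>{l+1..L}. cube n) \<and>
                   (\<forall>i\<in>{1..l}. real (hamming a (x i)) \<le> r \<and> real (hamming b (x i)) \<le> r) \<and>
     (\<forall>i\<in>{l+1..L}. real (hamming a (x i)) \<le> r \<and> real (hamming b (y i)) \<le> r)}
    = (SIGMA a:cube n. SIGMA b:cube n. (\<Pi>\<^sub>E i\<in>{1..L}. X a b i) \<times> (\<Pi>\<^sub>E i\<in>{l+1..L}. B b))"
    (is "?L = ?R")
  proof (intro set_eqI iffI)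
    fix z assume "z \<in> ?L"
    then obtain a b x y where z: "z = (a, b, x, y)" "a \<in> cube n" "b \<in> cube n"
      "x \<in> (\<Pi>\<^sub>E i\<in>{1..L}. cube n)" "y \<in> (\<Pi>\<^sub>E i\<in>{l+1..L}. cube n)"
      "\<forall>i\<in>{1..l}. real (hamming a (x i)) \<le> r \<and> real (hamming b (x i)) \<le> r"
      "\<forall>i\<in>{l+1..L}. real (hamming a (x i)) \<le> r \<and> real (hamming b (y i)) \<le> r" by blast
    have "x \<in> (\<Pi>\<^sub>E i\<in>{1..L}. X a b i)"
      using z(4,6,7) by (auto simp: PiE_iff X_def B_def split: if_splits)
    moreover have "y \<in> (\<Pi>\<^sub>E i\<in>{l+1..L}. B b)"
      using z(5,7) by (auto simp: PiE_iff B_def)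
    ultimately show "z \<in> ?R" using z by auto
  next
    fix z assume "z \<in> ?R"
    then obtain a b x y where z: "z = (a, b, x, y)" "a \<in> cube n" "b \<in> cube n"
      "x \<in> (\<Pi>\<^sub>E i\<in>{1..L}. X a b i)" "y \<in> (\<Pi>\<^sub>E i\<in>{l+1..L}. B b)" by auto
    have "x \<in> (\<Pi>\<^sub>E i\<in>{1..L}. cube n)" using z(4) by (auto simp: PiE_iff X_def B_def split: if_splits)
    moreover have "y \<in> (\<Pi>\<^sub>E i\<in>{l+1..L}. cube n)" using z(5) by (auto simp: PiE_iff B_def)
    moreover have "\<forall>i\<in>{1..l}. real (hamming a (x i)) \<le> r \<and> real (hamming b (x i)) \<le> r"
      using z(4) lL by (auto simp: PiE_iff X_def B_def split: if_splits)
    moreover have "\<forall>i\<in>{l+1..L}. real (hamming a (x i)) \<le> r \<and> real (hamming b (y i)) \<le> r"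
      using z(4,5) by (auto simp: PiE_iff X_def B_def split: if_splits)
    ultimately show "z \<in> ?L" using z by auto
  qed
  have cB: "card (B a) = Vol n r" if "a \<in> cube n" for a
    unfolding B_def by (rule ball_card[OF that])
  have fin: "finite (B a)" for a by (simp add: B_def finite_cube)
  have prodX: "(\<Prod>i\<in>{1..L}. card (X a b i)) = card (B a \<inter> B b) ^ l * Vol n r ^ (L - l)"
    if "a \<in> cube n" for a b
  proof -
    have U: "{1..L} = {1..l} \<union> {l+1..L}" using lL by auto
    have "(\<Prod>i\<in>{1..L}. card (X a b i)) = (\<Prod>i\<in>{1..l}. card (X a b i)) * (\<Prod>i\<in>{l+1..L}. card (X a b i))"
      unfolding U by (rule prod.union_disjoint) auto
    also have "(\<Prod>i\<in>{1..l}. card (X a b i)) = (\<Prod>i\<in>{1..l}. card (B a \<inter> B b))"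
      by (rule prod.cong) (auto simp: X_def)
    also have "(\<Prod>i\<in>{l+1..L}. card (X a b i)) = (\<Prod>i\<in>{l+1..L}. Vol n r)"
      by (rule prod.cong) (auto simp: X_def cB[OF that])
    finally show ?thesis by simp
  qed
  have "card ?R = (\<Sum>a\<in>cube n. \<Sum>b\<in>cube n. card ((\<Pi>\<^sub>E i\<in>{1..L}. X a b i) \<times> (\<Pi>\<^sub>E i\<in>{l+1..L}. B b)))"
  proof -
    have fR: "finite ((\<Pi>\<^sub>E i\<in>{1..L}. X a b i) \<times> (\<Pi>\<^sub>E i\<in>{l+1..L}. B b))" for a b
      by (intro finite_cartesian_product finite_PiE) (auto simp: X_def fin)
    have "card ?R = (\<Sum>a\<in>cube n. card (SIGMA b:cube n. (\<Pi>\<^sub>E i\<in>{1..L}. X a b i) \<times> (\<Pi>\<^sub>E i\<in>{l+1..L}. B b)))"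
      by (rule card_SigmaI, rule finite_cube, intro ballI finite_SigmaI finite_cube fR)
    also have "\<dots> = (\<Sum>a\<in>cube n. \<Sum>b\<in>cube n. card ((\<Pi>\<^sub>E i\<in>{1..L}. X a b i) \<times> (\<Pi>\<^sub>E i\<in>{l+1..L}. B b)))"
      by (rule sum.cong[OF refl], rule card_SigmaI, rule finite_cube, intro ballI fR)
    finally show ?thesis .
  qed
  also have "\<dots> = (\<Sum>a\<in>cube n. \<Sum>b\<in>cube n. card (B a \<inter> B b) ^ l * Vol n r ^ (L - l) * Vol n r ^ (L - l))"
  proof (rule sum.cong[OF refl], rule sum.cong[OF refl])
    fix a b assume a: "a \<in> cube n" and b: "b \<in> cube n"
    have 1: "card (\<Pi>\<^sub>E i\<in>{1..L}. X a b i) = card (B a \<inter> B b) ^ l * Vol n r ^ (L - l)"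
      using card_PiE[of "{1..L}" "X a b"] prodX[OF a, of b] by simp
    have 2: "card (\<Pi>\<^sub>E i\<in>{l+1..L}. B b) = Vol n r ^ (L - l)"
      using card_PiE[of "{l+1..L}" "\<lambda>i. B b"] cB[OF b] by simp
    show "card ((\<Pi>\<^sub>E i\<in>{1..L}. X a b i) \<times> (\<Pi>\<^sub>E i\<in>{l+1..L}. B b)) = card (B a \<inter> B b) ^ l * Vol n r ^ (L - l) * Vol n r ^ (L - l)"
      unfolding card_cartesian_product 1 2 by simp
  qed
  finally have "card ?R = (\<Sum>a\<in>cube n. \<Sum>b\<in>cube n. card (B a \<inter> B b) ^ l * Vol n r ^ (L - l) * Vol n r ^ (L - l))" .
  then show ?thesis by (simp only: eq)
qed

lemma card_filter_sum: "finite A \<Longrightarrow> card {x\<in>A. P x} = (\<Sum>x\<in>A. if P x then 1 else 0::nat)"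
  unfolding card_eq_sum by (rule sum.inter_filter)

lemma ham_le: "a \<in> cube n \<Longrightarrow> b \<in> cube n \<Longrightarrow> hamming a b \<le> n"
proof -
  assume "a \<in> cube n" "b \<in> cube n"
  then have "sd a b \<subseteq> {..<n}" by (auto simp: cube_def sd_def)
  then have "card (sd a b) \<le> card {..<n}" by (rule card_mono[OF finite_lessThan])
  then show ?thesis by (simp add: ham_sd)
qed


lemma sumW:
  fixes n :: nat and r :: real
  assumes a: "a \<in> cube n"
  shows "(\<Sum>b\<in>cube n. card ({x \<in> cube n. real (hamming a x) \<le> r} \<inter> {x \<in> cube n. real (hamming b x) \<le> r}))
     = Vol n r * Vol n r"
proof -
  let ?Q = "\<lambda>a x. real (hamming a x) \<le> r"
  have "(\<Sum>b\<in>cube n. card ({x \<in> cube n. ?Q a x} \<inter> {x \<in> cube n. ?Q b x}))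
      = (\<Sum>b\<in>cube n. \<Sum>x\<in>cube n. if ?Q a x \<and> ?Q b x then 1 else 0)"
  proof (rule sum.cong[OF refl])
    fix b
    have "{x \<in> cube n. ?Q a x} \<inter> {x \<in> cube n. ?Q b x} = {x \<in> cube n. ?Q a x \<and> ?Q b x}" by auto
    then show "card ({x \<in> cube n. ?Q a x} \<inter> {x \<in> cube n. ?Q b x}) = (\<Sum>x\<in>cube n. if ?Q a x \<and> ?Q b x then 1 else 0)"
      using card_filter_sum[OF finite_cube, where P="\<lambda>x. ?Q a x \<and> ?Q b x"] by simp
  qed
  also have "\<dots> = (\<Sum>x\<in>cube n. \<Sum>b\<in>cube n. if ?Q a x \<and> ?Q b x then 1 else 0)"
    by (rule sum.swap[of "\<lambda>b x. if ?Q a x \<and> ?Q b x then 1 else 0"])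
  also have "\<dots> = (\<Sum>x\<in>cube n. if ?Q a x then Vol n r else 0)"
  proof (rule sum.cong[OF refl])
    fix x assume x: "x \<in> cube n"
    have "(\<Sum>b\<in>cube n. if ?Q b x then 1 else 0) = card {b \<in> cube n. ?Q b x}"
      using card_filter_sum[OF finite_cube, where P="\<lambda>b. ?Q b x"] by simp
    also have "card {b \<in> cube n. ?Q b x} = card {b \<in> cube n. ?Q x b}"
    proof (rule arg_cong[where f=card], rule Collect_cong)
      fix b show "(b \<in> cube n \<and> ?Q b x) = (b \<in> cube n \<and> ?Q x b)" using ham_comm[of b x] by simp
    qed
    also have "\<dots> = Vol n r" by (rule ball_card[OF x])
    finally have V: "(\<Sum>b\<in>cube n. if ?Q b x then 1 else 0) = Vol n r" .
    have "(\<Sum>b\<in>cube n. if ?Q a x \<and> ?Q b x then 1 else 0) = (if ?Q a x then (\<Sum>b\<in>cube n. if ?Q b x then 1 else 0) else (0::nat))"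
      by simp
    then show "(\<Sum>b\<in>cube n. if ?Q a x \<and> ?Q b x then 1 else 0) = (if ?Q a x then Vol n r else 0)"
      using V by simp
  qed
  also have "\<dots> = (\<Sum>x\<in>cube n. Vol n r * (if ?Q a x then 1 else 0))"
    by (rule sum.cong[OF refl]) simp
  also have "\<dots> = Vol n r * (\<Sum>x\<in>cube n. if ?Q a x then 1 else 0)"
    by (rule sum_distrib_left[symmetric])
  also have "\<dots> = Vol n r * card {x \<in> cube n. ?Q a x}"
    using card_filter_sum[OF finite_cube, where P="?Q a"] by simp
  also have "\<dots> = Vol n r * Vol n r" using ball_card[OF a, of r] by simp
  finally show ?thesis .
qed




lemma bound1:
  fixes n :: nat and r :: real
  assumes a: "a \<in> cube n" and l: "1 \<le> l"
  shows "(\<Sum>b\<in>cube n. real (card ({x \<in> cube n. real (hamming a x) \<le> r} \<inter> {x \<in> cube n. real (hamming b x) \<le> r})) ^ l)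
     \<le> real (Vol n r) ^ (l + 1)"
proof -
  let ?W = "\<lambda>b. real (card ({x \<in> cube n. real (hamming a x) \<le> r} \<inter> {x \<in> cube n. real (hamming b x) \<le> r}))"
  let ?V = "real (Vol n r)"
  have WV: "?W b \<le> ?V" for b
  proof -
    have "card ({x \<in> cube n. real (hamming a x) \<le> r} \<inter> {x \<in> cube n. real (hamming b x) \<le> r})
        \<le> card {x \<in> cube n. real (hamming a x) \<le> r}"
      by (rule card_mono) (auto simp: finite_cube)
    then show ?thesis using ball_card[OF a, of r] by simp
  qed
  have "(\<Sum>b\<in>cube n. ?W b ^ l) \<le> (\<Sum>b\<in>cube n. ?V ^ (l - 1) * ?W b)"
  proof (rule sum_mono)
    fix b
    have "?W b ^ l = ?W b ^ (l - 1) * ?W b" using l by (simp add: power_Suc2[symmetric])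
    also have "\<dots> \<le> ?V ^ (l - 1) * ?W b"
      by (rule mult_right_mono[OF power_mono[OF WV]]) auto
    finally show "?W b ^ l \<le> ?V ^ (l - 1) * ?W b" .
  qed
  also have "\<dots> = ?V ^ (l - 1) * (\<Sum>b\<in>cube n. ?W b)" by (rule sum_distrib_left[symmetric])
  also have "(\<Sum>b\<in>cube n. ?W b) = ?V * ?V"
    using arg_cong[OF sumW[OF a, of r], of real] by simp
  also have "?V ^ (l - 1) * (?V * ?V) = ?V ^ (l + 1)"
  proof -
    obtain m where m: "l = Suc m" using l by (cases l) auto
    show ?thesis unfolding m by (simp add: algebra_simps)
  qed
  finally show ?thesis .
qed

lemma powr2_pow: "(2 powr x) ^ k = 2 powr (x * real k)"
  by (simp add: powr_realpow[symmetric] powr_powr)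

lemma Vol_pos:
  assumes "0 \<le> r" shows "0 < Vol n r"
proof -
  have "{} \<in> {y \<in> cube n. real (hamming {} y) \<le> r}" using assms by (simp add: cube_def hamming_def)
  then show ?thesis unfolding Vol_def by (subst card_gt_0_iff) (auto simp: finite_cube)
qed

lemma bound2:
  fixes n :: nat and r alpha C :: real
  assumes a: "a \<in> cube n" and r0: "0 \<le> r" and lL: "l \<le> L"
    and H: "\<forall>d. 1 \<le> d \<and> d \<le> n \<longrightarrow> real (Vol2 n r d) / real (Vol n r) \<le> 2 powr (- alpha * real d) * C * sqrt (real n)"
    and Cn: "1 \<le> C * sqrt (real n)"
  shows "(\<Sum>b\<in>cube n. real (card ({x \<in> cube n. real (hamming a x) \<le> r} \<inter> {x \<in> cube n. real (hamming b x) \<le> r})) ^ l)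
     \<le> real (Vol n r) ^ l * (C * sqrt (real n)) ^ L * (1 + 2 powr (- alpha * real l)) ^ n"
proof -
  let ?W = "\<lambda>b. real (card ({x \<in> cube n. real (hamming a x) \<le> r} \<inter> {x \<in> cube n. real (hamming b x) \<le> r}))"
  let ?V = "real (Vol n r)"
  define t where "t = 2 powr (- alpha * real l)"
  define M where "M = (C * sqrt (real n)) ^ L"
  have Vpos: "?V > 0" using Vol_pos[OF r0] by simp
  have M1: "1 \<le> M" unfolding M_def using Cn by (rule one_le_power)
  have tpos: "t > 0" unfolding t_def by simp
  have WV: "?W b \<le> ?V" for b
  proof -
    have "card ({x \<in> cube n. real (hamming a x) \<le> r} \<inter> {x \<in> cube n. real (hamming b x) \<le> r})
        \<le> card {x \<in> cube n. real (hamming a x) \<le> r}"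
      by (rule card_mono) (auto simp: finite_cube)
    then show ?thesis using ball_card[OF a, of r] by simp
  qed
  have each: "?W b ^ l \<le> ?V ^ l * M * t ^ hamming a b" if b: "b \<in> cube n" for b
  proof (cases "hamming a b = 0")
    case True
    have "?W b ^ l \<le> ?V ^ l" by (rule power_mono[OF WV]) simp
    also have "\<dots> \<le> ?V ^ l * M" using M1 Vpos by simp
    finally show ?thesis using True by simp
  next
    case False
    let ?d = "hamming a b"
    have "{x \<in> cube n. real (hamming a x) \<le> r} \<inter> {x \<in> cube n. real (hamming b x) \<le> r}
        = {x \<in> cube n. real (hamming a x) \<le> r \<and> real (hamming b x) \<le> r}" by auto
    then have Weq: "?W b = real (Vol2 n r ?d)" using W_eq[OF a b, of r] by simp
    have "1 \<le> ?d" "?d \<le> n" using False ham_le[OF a b] by auto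
    then have "real (Vol2 n r ?d) / ?V \<le> 2 powr (- alpha * real ?d) * C * sqrt (real n)" using H by blast
    then have h: "real (Vol2 n r ?d) \<le> 2 powr (- alpha * real ?d) * C * sqrt (real n) * ?V"
      using Vpos by (simp add: pos_divide_le_eq)
    have e: "2 powr (- alpha * real ?d) * C * sqrt (real n) * ?V = ?V * (2 powr (- alpha * real ?d) * (C * sqrt (real n)))"
      by (simp add: ac_simps)
    have "?W b \<le> ?V * (2 powr (- alpha * real ?d) * (C * sqrt (real n)))"
      unfolding Weq using h e by linarith
    then have "?W b ^ l \<le> (?V * (2 powr (- alpha * real ?d) * (C * sqrt (real n)))) ^ l"
      by (rule power_mono) simp
    also have "\<dots> = ?V ^ l * (2 powr (- alpha * real ?d)) ^ l * (C * sqrt (real n)) ^ l"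
      by (simp add: power_mult_distrib)
    also have "(2 powr (- alpha * real ?d)) ^ l = t ^ ?d"
      unfolding t_def powr2_pow by (simp add: mult.assoc mult.commute[of "real l"])
    also have "?V ^ l * t ^ ?d * (C * sqrt (real n)) ^ l \<le> ?V ^ l * t ^ ?d * M"
      unfolding M_def using Vpos tpos by (intro mult_left_mono power_increasing lL Cn) auto
    finally show ?thesis by (simp add: mult.commute mult.left_commute)
  qed
  have "(\<Sum>b\<in>cube n. ?W b ^ l) \<le> (\<Sum>b\<in>cube n. ?V ^ l * M * t ^ hamming a b)"
    by (rule sum_mono) (rule each)
  also have "\<dots> = ?V ^ l * M * (\<Sum>b\<in>cube n. t ^ hamming a b)" by (rule sum_distrib_left[symmetric])
  also have "(\<Sum>b\<in>cube n. t ^ hamming a b) = (1 + t) ^ n"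
    using sum_trans[OF a, of "\<lambda>d. t ^ d"] sum_pow_card[where t=t and n=n] by simp
  finally show ?thesis unfolding M_def t_def .
qed

theorem lemma10:
  fixes p C :: real and l L :: nat
  assumes "0 < p" and "p < 1/2"
    and "1 \<le> l" and "l \<le> L"
    and "C > 0"
    and "\<exists>N0. \<forall>n\<ge>N0. p * real n \<in> \<int> \<longrightarrow> (\<forall>d. 1 \<le> d \<and> d \<le> n \<longrightarrow>
            real (Vol2 n (p * real n) d) / real (Vol n (p * real n))
              \<le> 2 powr (- alpha_p p * real d) * C * sqrt (real n))"
  shows "\<exists>N. \<forall>n\<ge>N. p * real n \<in> \<int> \<longrightarrow>
     (let \<mu> = real (Vol n (p * real n)) / 2 ^ n in
      prob_E n p l L \<le> min (\<mu> ^ (2 * L - l + 1))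
        ((1 / 2 ^ n) * \<mu> ^ (2 * L - l) * C ^ L * sqrt (real n) ^ L
          * (1 + 2 powr (- alpha_p p * real l)) ^ n))"
proof -
  from assms(6) obtain N0 where N0: "\<forall>n\<ge>N0. p * real n \<in> \<int> \<longrightarrow> (\<forall>d. 1 \<le> d \<and> d \<le> n \<longrightarrow>
            real (Vol2 n (p * real n) d) / real (Vol n (p * real n))
              \<le> 2 powr (- alpha_p p * real d) * C * sqrt (real n))" by blast
  define N1 where "N1 = nat \<lceil>1 / C^2\<rceil>"
  show ?thesis
  proof (rule exI[of _ "max N0 N1"], intro allI impI)
    fix n assume n: "max N0 N1 \<le> n" and pn: "p * real n \<in> \<int>"
    have r0: "0 \<le> p * real n" using assms(1) by simp
    have H: "\<forall>d. 1 \<le> d \<and> d \<le> n \<longrightarrow> real (Vol2 n (p * real n) d) / real (Vol n (p * real n))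
              \<le> 2 powr (- alpha_p p * real d) * C * sqrt (real n)" using N0 n pn by auto
    have Cn: "1 \<le> C * sqrt (real n)"
    proof -
      have "1 / C^2 \<le> real N1" unfolding N1_def by linarith
      also have "\<dots> \<le> real n" using n by simp
      finally have "sqrt (1 / C^2) \<le> sqrt (real n)" by (rule real_sqrt_le_mono)
      then have "1 / C \<le> sqrt (real n)" using assms(5) by (simp add: real_sqrt_divide)
      then show ?thesis using assms(5) by (simp add: divide_le_eq mult.commute)
    qed
    show "let \<mu> = real (Vol n (p * real n)) / 2 ^ n in
      prob_E n p l L \<le> min (\<mu> ^ (2 * L - l + 1))
        ((1 / 2 ^ n) * \<mu> ^ (2 * L - l) * C ^ L * sqrt (real n) ^ L
          * (1 + 2 powr (- alpha_p p * real l)) ^ n)"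
    proof -
      let ?r = "p * real n"
      let ?V = "real (Vol n ?r)"
      let ?T = "(2::real) ^ n"
      let ?W = "\<lambda>a b. real (card ({x \<in> cube n. real (hamming a x) \<le> ?r} \<inter> {x \<in> cube n. real (hamming b x) \<le> ?r}))"
      let ?t = "(1 + 2 powr (- alpha_p p * real l)) ^ n"
      define k where "k = 2 * L - l"
      define M where "M = (C * sqrt (real n)) ^ L"
      define S where "S = (\<Sum>a\<in>cube n. \<Sum>b\<in>cube n. ?W a b ^ l * ?V ^ (L - l) * ?V ^ (L - l))"
      have Tpos: "?T > 0" by simp
      have Vpos: "?V > 0" using Vol_pos[OF r0] by simp
      have num: "real (card {(a, b, x, y). a \<in> cube n \<and> b \<in> cube n \<and>
                   x \<in> (\<Pi>\<^sub>E i\<in>{1..L}. cube n) \<and> y \<in> (\<Pi>\<^sub>E i\<in>{l+1..L}. cube n) \<and>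
                   event_E n p l L a b x y}) = S"
        unfolding event_E_def S_def using card_fav[OF assms(4), of n ?r] by simp
      have den: "real (card (cube n \<times> cube n \<times> (\<Pi>\<^sub>E i\<in>{1..L}. cube n) \<times> (\<Pi>\<^sub>E i\<in>{l+1..L}. cube n)))
          = ?T * ?T ^ (k + 1)"
      proof -
        have e: "Suc (k + 1) = 2 + L + (L - l)" unfolding k_def using assms(4) by simp
        have "real (card (cube n \<times> cube n \<times> (\<Pi>\<^sub>E i\<in>{1..L}. cube n) \<times> (\<Pi>\<^sub>E i\<in>{l+1..L}. cube n)))
           = ?T * (?T * (?T ^ L * ?T ^ (L - l)))"
          by (simp add: card_cartesian_product card_PiE card_cube)
        also have "\<dots> = ?T ^ (2 + L + (L - l))" by (simp add: power_add)
        also have "\<dots> = ?T * ?T ^ (k + 1)" unfolding e[symmetric] by simp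
        finally show ?thesis .
      qed
      have prob: "prob_E n p l L = S / (?T * ?T ^ (k + 1))"
        unfolding prob_E_def num den ..
      have Sdist: "S = (\<Sum>a\<in>cube n. (\<Sum>b\<in>cube n. ?W a b ^ l) * (?V ^ (L - l) * ?V ^ (L - l)))"
        unfolding S_def by (simp add: sum_distrib_right mult.assoc)
      have B1: "S \<le> ?T * ?V ^ (k + 1)"
      proof -
        have "S \<le> (\<Sum>a\<in>cube n. ?V ^ (l + 1) * (?V ^ (L - l) * ?V ^ (L - l)))"
          unfolding Sdist
          by (rule sum_mono, rule mult_right_mono[OF bound1[OF _ assms(3)]]) auto
        also have "\<dots> = ?T * ?V ^ (k + 1)"
        proof -
          have e: "k + 1 = (l + 1) + (L - l) + (L - l)" unfolding k_def using assms(4) by simp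
          show ?thesis unfolding e by (simp add: card_cube power_add)
        qed
        finally show ?thesis .
      qed
      have B2: "S \<le> ?T * (?V ^ k * M * ?t)"
      proof -
        have "S \<le> (\<Sum>a\<in>cube n. ?V ^ l * M * ?t * (?V ^ (L - l) * ?V ^ (L - l)))"
          unfolding Sdist M_def
          by (rule sum_mono, rule mult_right_mono[OF bound2[OF _ r0 assms(4) H Cn]]) auto
        also have "\<dots> = ?T * (?V ^ k * M * ?t)"
        proof -
          have e: "k = l + (L - l) + (L - l)" unfolding k_def using assms(4) by simp
          show ?thesis unfolding e by (simp add: card_cube power_add ac_simps)
        qed
        finally show ?thesis .
      qed
      have P1: "prob_E n p l L \<le> (?V / ?T) ^ (k + 1)"
      proof -
        have "prob_E n p l L \<le> (?T * ?V ^ (k + 1)) / (?T * ?T ^ (k + 1))"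
          unfolding prob by (rule divide_right_mono[OF B1]) simp
        also have "\<dots> = (?V / ?T) ^ (k + 1)" by (simp add: power_divide)
        finally show ?thesis .
      qed
      have P2: "prob_E n p l L \<le> (1 / ?T) * (?V / ?T) ^ k * C ^ L * sqrt (real n) ^ L * ?t"
      proof -
        have "prob_E n p l L \<le> (?T * (?V ^ k * M * ?t)) / (?T * ?T ^ (k + 1))"
          unfolding prob by (rule divide_right_mono[OF B2]) simp
        also have "\<dots> = (1 / ?T) * (?V / ?T) ^ k * C ^ L * sqrt (real n) ^ L * ?t"
          unfolding M_def by (simp add: power_divide power_mult_distrib)
        finally show ?thesis .
      qed
      have kk: "2 * L - l + 1 = k + 1" unfolding k_def ..
      show ?thesis unfolding Let_def kk using P1 P2 unfolding k_def by simp
    qed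
  qed
qed


end
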